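(* Let $X$ be a finite connected poset and $\theta\in\mathcal{M}(X)$. Then $\theta\in\mathcal{AM}(X)$ if and only if $s^+_{\theta,\Gamma}(z)-s^-_{\theta,\Gamma}(z)=t^+_{\theta,\Gamma}(z)-t^-_{\theta,\Gamma}(z)$ holds for every $z\in X$ and every closed semiwalk $\Gamma:u_0,\dots,u_m=u_0$ with $m\ge2$.
   Context: For $x<y$, $e_{xy}$ denotes the incidence-algebra basis element and $B=\{e_{xy}:x<y\}$. For a bijection $\theta:B\to B$ and a maximal chain $C:u_1<\dots<u_k$, $\theta$ is increasing on $C$ if there is a maximal chain $D:v_1<\dots<v_k$ with $\theta(e_{u_iu_j})=e_{v_iv_j}$ for all $i<j$, decreasing if $\theta(e_{u_iu_j})=e_{v_{k-j+1}v_{k-i+1}}$ for all $i<j$. $\mathcal{M}(X)$ is the set of bijections $B\to B$ increasing or decreasing on every maximal chain. A semiwalk is a sequence $u_0,\dots,u_m$ with $u_i<u_{i+1}$ or $u_i>u_{i+1}$ for each $i$; a walk is a semiwalk in which moreover one of $u_i,u_{i+1}$ covers the other for each $i$; (semi)walks are closed if $u_0=u_m$. For a closed semiwalk $\Gamma:u_0,\dots,u_m=u_0$ and $z\in X$: $s^+_{\theta,\Gamma}(z)=|\{i: u_i<u_{i+1},\ \exists w>z,\ \theta(e_{zw})=e_{u_iu_{i+1}}\}|$, $s^-_{\theta,\Gamma}(z)=|\{i: u_i>u_{i+1},\ \exists w>z,\ \theta(e_{zw})=e_{u_{i+1}u_i}\}|$, $t^+_{\theta,\Gamma}(z)=|\{i: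 u_i<u_{i+1},\ \exists w<z,\ \theta(e_{wz})=e_{u_iu_{i+1}}\}|$, $t^-_{\theta,\Gamma}(z)=|\{i: u_i>u_{i+1},\ \exists w<z,\ \theta(e_{wz})=e_{u_{i+1}u_i}\}|$, $0\le i\le m-1$. $\theta$ is admissible if $s^+-s^-=t^+-t^-$ at every $z$ for every closed walk; $\mathcal{AM}(X)$ is the set of admissible elements of $\mathcal{M}(X)$. *)

theory Defs
  imports Main
begin

text \<open>A poset is modelled as a carrier set X of a type with a partial order
  (the order on X is the restriction of the type's order).  The basis element
  e_xy (x<y) is represented by the pair (x,y); B is the set of such pairs.\<close>

definition basisB :: "'a::order set \<Rightarrow> ('a \<times> 'a) set" where
  "basisB X = {(x, y). x \<in> X \<and> y \<in> X \<and> x < y}"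

definition is_chain_in :: "'a::order set \<Rightarrow> 'a set \<Rightarrow> bool" where
  "is_chain_in X C \<longleftrightarrow> C \<subseteq> X \<and> (\<forall>x\<in>C. \<forall>y\<in>C. x \<le> y \<or> y \<le> x)"

definition max_chain :: "'a::order set \<Rightarrow> 'a list \<Rightarrow> bool" where
  "max_chain X us \<longleftrightarrow> sorted_wrt (<) us \<and> is_chain_in X (set us) \<and>
     (\<forall>C. is_chain_in X C \<and> set us \<subseteq> C \<longrightarrow> C = set us)"

definition increasing_on :: "'a::order set \<Rightarrow> ('a \<times> 'a \<Rightarrow> 'a \<times> 'a) \<Rightarrow> 'a list \<Rightarrow> bool" where
  "increasing_on X \<theta> us \<longleftrightarrow> (\<exists>vs. max_chain X vs \<and> length vs = length us \<and>
     (\<forall>i j. i < j \<and> j < length us \<longrightarrow> \<theta> (us ! i, us ! j) = (vs ! i, vs ! j)))"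

definition decreasing_on :: "'a::order set \<Rightarrow> ('a \<times> 'a \<Rightarrow> 'a \<times> 'a) \<Rightarrow> 'a list \<Rightarrow> bool" where
  "decreasing_on X \<theta> us \<longleftrightarrow> (\<exists>vs. max_chain X vs \<and> length vs = length us \<and>
     (\<forall>i j. i < j \<and> j < length us \<longrightarrow>
        \<theta> (us ! i, us ! j) = (vs ! (length us - 1 - j), vs ! (length us - 1 - i))))"

definition M_set :: "'a::order set \<Rightarrow> ('a \<times> 'a \<Rightarrow> 'a \<times> 'a) set" where
  "M_set X = {\<theta>. bij_betw \<theta> (basisB X) (basisB X) \<and>
     (\<forall>us. max_chain X us \<longrightarrow> increasing_on X \<theta> us \<or> decreasing_on X \<theta> us)}"

definition covers :: "'a::order set \<Rightarrow> 'a \<Rightarrow> 'a \<Rightarrow> bool" where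
  "covers X x y \<longleftrightarrow> x \<in> X \<and> y \<in> X \<and> x < y \<and> \<not> (\<exists>z\<in>X. x < z \<and> z < y)"

text \<open>A semiwalk u_0,...,u_m is a nonempty list of elements of X (length m+1).\<close>
definition semiwalk :: "'a::order set \<Rightarrow> 'a list \<Rightarrow> bool" where
  "semiwalk X us \<longleftrightarrow> us \<noteq> [] \<and> set us \<subseteq> X \<and>
     (\<forall>i. Suc i < length us \<longrightarrow> us ! i < us ! Suc i \<or> us ! i > us ! Suc i)"

definition walk :: "'a::order set \<Rightarrow> 'a list \<Rightarrow> bool" where
  "walk X us \<longleftrightarrow> semiwalk X us \<and>
     (\<forall>i. Suc i < length us \<longrightarrow> covers X (us ! i) (us ! Suc i) \<or> covers X (us ! Suc i) (us ! i))"

definition closed_sw :: "'a list \<Rightarrow> bool" where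
  "closed_sw us \<longleftrightarrow> hd us = last us"

definition connected_poset :: "'a::order set \<Rightarrow> bool" where
  "connected_poset X \<longleftrightarrow> (\<forall>x\<in>X. \<forall>y\<in>X. \<exists>us. semiwalk X us \<and> hd us = x \<and> last us = y)"

definition s_plus :: "'a::order set \<Rightarrow> ('a \<times> 'a \<Rightarrow> 'a \<times> 'a) \<Rightarrow> 'a list \<Rightarrow> 'a \<Rightarrow> nat" where
  "s_plus X \<theta> us z = card {i. Suc i < length us \<and> us ! i < us ! Suc i \<and>
      (\<exists>w\<in>X. w > z \<and> \<theta> (z, w) = (us ! i, us ! Suc i))}"

definition s_minus :: "'a::order set \<Rightarrow> ('a \<times> 'a \<Rightarrow> 'a \<times> 'a) \<Rightarrow> 'a list \<Rightarrow> 'a \<Rightarrow> nat" where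
  "s_minus X \<theta> us z = card {i. Suc i < length us \<and> us ! i > us ! Suc i \<and>
      (\<exists>w\<in>X. w > z \<and> \<theta> (z, w) = (us ! Suc i, us ! i))}"

definition t_plus :: "'a::order set \<Rightarrow> ('a \<times> 'a \<Rightarrow> 'a \<times> 'a) \<Rightarrow> 'a list \<Rightarrow> 'a \<Rightarrow> nat" where
  "t_plus X \<theta> us z = card {i. Suc i < length us \<and> us ! i < us ! Suc i \<and>
      (\<exists>w\<in>X. w < z \<and> \<theta> (w, z) = (us ! i, us ! Suc i))}"

definition t_minus :: "'a::order set \<Rightarrow> ('a \<times> 'a \<Rightarrow> 'a \<times> 'a) \<Rightarrow> 'a list \<Rightarrow> 'a \<Rightarrow> nat" where
  "t_minus X \<theta> us z = card {i. Suc i < length us \<and> us ! i > us ! Suc i \<and>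
      (\<exists>w\<in>X. w < z \<and> \<theta> (w, z) = (us ! Suc i, us ! i))}"

definition balanced_at :: "'a::order set \<Rightarrow> ('a \<times> 'a \<Rightarrow> 'a \<times> 'a) \<Rightarrow> 'a list \<Rightarrow> 'a \<Rightarrow> bool" where
  "balanced_at X \<theta> us z \<longleftrightarrow>
     int (s_plus X \<theta> us z) - int (s_minus X \<theta> us z) = int (t_plus X \<theta> us z) - int (t_minus X \<theta> us z)"

definition admissible :: "'a::order set \<Rightarrow> ('a \<times> 'a \<Rightarrow> 'a \<times> 'a) \<Rightarrow> bool" where
  "admissible X \<theta> \<longleftrightarrow> (\<forall>us. walk X us \<and> closed_sw us \<longrightarrow> (\<forall>z\<in>X. balanced_at X \<theta> us z))"

definition AM_set :: "'a::order set \<Rightarrow> ('a \<times> 'a \<Rightarrow> 'a \<times> 'a) set" where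
  "AM_set X = {\<theta> \<in> M_set X. admissible X \<theta>}"

end

theory Submission
  imports Defs
begin


definition fs :: "'a::order set \<Rightarrow> ('a \<times> 'a \<Rightarrow> 'a \<times> 'a) \<Rightarrow> 'a \<Rightarrow> 'a \<Rightarrow> 'a \<Rightarrow> int" where
  "fs X \<theta> z a b = (if \<exists>w\<in>X. z < w \<and> \<theta> (z, w) = (a, b) then 1 else 0)
     - (if \<exists>w\<in>X. w < z \<and> \<theta> (w, z) = (a, b) then 1 else 0)"

definition stp :: "'a::order set \<Rightarrow> ('a \<times> 'a \<Rightarrow> 'a \<times> 'a) \<Rightarrow> 'a \<Rightarrow> 'a \<Rightarrow> 'a \<Rightarrow> int" where
  "stp X \<theta> z a b = (if a < b then fs X \<theta> z a b else if b < a then - fs X \<theta> z b a else 0)"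

fun FF :: "'a::order set \<Rightarrow> ('a \<times> 'a \<Rightarrow> 'a \<times> 'a) \<Rightarrow> 'a \<Rightarrow> 'a list \<Rightarrow> int" where
  "FF X \<theta> z (a # b # rest) = stp X \<theta> z a b + FF X \<theta> z (b # rest)"
| "FF X \<theta> z _ = 0"

fun wk :: "'a::order set \<Rightarrow> 'a list \<Rightarrow> bool" where
  "wk X [] = False"
| "wk X [a] = (a \<in> X)"
| "wk X (a # b # rest) = (a \<in> X \<and> (covers X a b \<or> covers X b a) \<and> wk X (b # rest))"

fun sw :: "'a::order set \<Rightarrow> 'a list \<Rightarrow> bool" where
  "sw X [] = False"
| "sw X [a] = (a \<in> X)"
| "sw X (a # b # rest) = (a \<in> X \<and> (a < b \<or> b < a) \<and> sw X (b # rest))"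

lemma all_Suc_split:
  "(\<forall>i. Suc i < length (a # b # rest) \<longrightarrow> P i) \<longleftrightarrow> P 0 \<and> (\<forall>i. Suc i < length (b # rest) \<longrightarrow> P (Suc i))"
  by (auto, case_tac i, auto)

lemma semiwalk_sw: "semiwalk X us \<longleftrightarrow> sw X us"
proof (induction X us rule: sw.induct)
  case (3 X a b rest)
  show ?case unfolding semiwalk_def all_Suc_split using 3 by (auto simp: semiwalk_def)
qed (auto simp: semiwalk_def)

lemma walk_wk: "walk X us \<longleftrightarrow> wk X us"
proof (induction X us rule: wk.induct)
  case (3 X a b rest)
  show ?case unfolding walk_def semiwalk_def all_Suc_split using 3
    by (auto simp: walk_def semiwalk_def covers_def)
qed (auto simp: walk_def semiwalk_def)

lemma card_shift:
  "card {i. Suc i < length (a # b # rest) \<and> R ((a # b # rest) ! i) ((a # b # rest) ! Suc i)}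
   = (if R a b then 1 else 0) + card {i. Suc i < length (b # rest) \<and> R ((b # rest) ! i) ((b # rest) ! Suc i)}"
proof -
  let ?S = "{i. Suc i < length (b # rest) \<and> R ((b # rest) ! i) ((b # rest) ! Suc i)}"
  have eq: "{i. Suc i < length (a # b # rest) \<and> R ((a # b # rest) ! i) ((a # b # rest) ! Suc i)}
     = (if R a b then {0} else {}) \<union> Suc ` ?S"
    apply (auto simp: image_iff)
    apply (case_tac x, auto)+
    done
  have fin: "finite ?S" by (rule finite_subset[of _ "{..<length (b#rest)}"]) auto
  show ?thesis unfolding eq using fin by (auto simp: card_image)
qed

lemma card_short: "length us \<le> 1 \<Longrightarrow> card {i. Suc i < length us \<and> P i} = 0"
  by simp

lemma step_contrib:
  "(if a < b \<and> (\<exists>w\<in>X. w > z \<and> \<theta> (z, w) = (a, b)) then 1 else 0)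
   - (if b < a \<and> (\<exists>w\<in>X. w > z \<and> \<theta> (z, w) = (b, a)) then 1 else 0)
   - (if a < b \<and> (\<exists>w\<in>X. w < z \<and> \<theta> (w, z) = (a, b)) then 1 else 0)
   + (if b < a \<and> (\<exists>w\<in>X. w < z \<and> \<theta> (w, z) = (b, a)) then 1 else (0::int))
   = stp X \<theta> z a b"
proof (cases "a < b")
  case True
  then have "\<not> b < a" by auto
  then show ?thesis using True by (simp add: stp_def fs_def)
next
  case False
  then show ?thesis by (cases "b < a") (simp_all add: stp_def fs_def)
qed

lemma int_if_add: "int ((if P then 1 else 0) + n) = (if P then 1 else 0) + int n"
  by simp

lemma balanced_FF: "balanced_at X \<theta> us z \<longleftrightarrow> FF X \<theta> z us = 0"
proof -
  have "int (s_plus X \<theta> us z) - int (s_minus X \<theta> us z) - int (t_plus X \<theta> us z) + int (t_minus X \<theta> us z)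
     = FF X \<theta> z us"
  proof (induction X \<theta> z us rule: FF.induct)
    case (1 X \<theta> z a b rest)
    have sp: "s_plus X \<theta> (a#b#rest) z = (if a < b \<and> (\<exists>w\<in>X. w > z \<and> \<theta> (z, w) = (a, b)) then 1 else 0) + s_plus X \<theta> (b#rest) z"
      unfolding s_plus_def using card_shift[where R="\<lambda>a b. a < b \<and> (\<exists>w\<in>X. w > z \<and> \<theta> (z, w) = (a, b))"] by simp
    have sm: "s_minus X \<theta> (a#b#rest) z = (if b < a \<and> (\<exists>w\<in>X. w > z \<and> \<theta> (z, w) = (b, a)) then 1 else 0) + s_minus X \<theta> (b#rest) z"
      unfolding s_minus_def using card_shift[where R="\<lambda>a b. b < a \<and> (\<exists>w\<in>X. w > z \<and> \<theta> (z, w) = (b, a))"] by simp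
    have tp: "t_plus X \<theta> (a#b#rest) z = (if a < b \<and> (\<exists>w\<in>X. w < z \<and> \<theta> (w, z) = (a, b)) then 1 else 0) + t_plus X \<theta> (b#rest) z"
      unfolding t_plus_def using card_shift[where R="\<lambda>a b. a < b \<and> (\<exists>w\<in>X. w < z \<and> \<theta> (w, z) = (a, b))"] by simp
    have tm: "t_minus X \<theta> (a#b#rest) z = (if b < a \<and> (\<exists>w\<in>X. w < z \<and> \<theta> (w, z) = (b, a)) then 1 else 0) + t_minus X \<theta> (b#rest) z"
      unfolding t_minus_def using card_shift[where R="\<lambda>a b. b < a \<and> (\<exists>w\<in>X. w < z \<and> \<theta> (w, z) = (b, a))"] by simp
    have "FF X \<theta> z (a # b # rest) = stp X \<theta> z a b + FF X \<theta> z (b # rest)" by simp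
    also note step_contrib[symmetric]
    also note 1[symmetric]
    finally show ?case unfolding sp sm tp tm by (simp only: int_if_add)
  qed (auto simp: s_plus_def s_minus_def t_plus_def t_minus_def)
  then show ?thesis unfolding balanced_at_def by linarith
qed

lemma FF_append: "xs \<noteq> [] \<Longrightarrow> ys \<noteq> [] \<Longrightarrow> last xs = hd ys \<Longrightarrow>
   FF X \<theta> z (xs @ tl ys) = FF X \<theta> z xs + FF X \<theta> z ys"
proof (induction X \<theta> z xs rule: FF.induct)
  case (1 X \<theta> z a b rest)
  have "FF X \<theta> z ((b # rest) @ tl ys) = FF X \<theta> z (b # rest) + FF X \<theta> z ys"
    using 1 by simp
  then show ?case by simp
next
  case ("2_2" X \<theta> z v)
  then show ?case by (cases ys) auto
qed auto

lemma wk_append: "wk X xs \<Longrightarrow> wk X ys \<Longrightarrow> last xs = hd ys \<Longrightarrow> wk X (xs @ tl ys)"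
proof (induction X xs rule: wk.induct)
  case (2 X a)
  then show ?case by (cases ys) auto
next
  case (3 X a b rest)
  have "wk X ((b # rest) @ tl ys)" using 3 by simp
  then show ?case using 3 by simp
qed auto

lemma wk_ne: "wk X xs \<Longrightarrow> xs \<noteq> []" by (cases xs) auto

lemma stp_swap: "stp X \<theta> z b a = - stp X \<theta> z a b"
  by (auto simp: stp_def)

lemma rev_props: "wk X xs \<Longrightarrow> wk X (rev xs) \<and> FF X \<theta> z (rev xs) = - FF X \<theta> z xs"
proof (induction X xs rule: wk.induct)
  case (3 X a b rest)
  have r: "rev (a # b # rest) = rev (b # rest) @ tl [b, a]" by simp
  have w: "wk X [b, a]" using 3 by (auto simp: covers_def)
  have ne: "rev (b # rest) \<noteq> []" by simp
  have ih: "wk X (rev (b # rest))" "FF X \<theta> z (rev (b # rest)) = - FF X \<theta> z (b # rest)" using 3 by auto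
  have l: "last (rev (b # rest)) = hd [b, a]" by simp
  have "wk X (rev (a # b # rest))" unfolding r by (rule wk_append[OF ih(1) w l])
  moreover have "FF X \<theta> z (rev (a # b # rest)) = - FF X \<theta> z (a # b # rest)"
  proof -
    have e: "FF X \<theta> z (rev (b # rest) @ tl [b, a]) = FF X \<theta> z (rev (b # rest)) + FF X \<theta> z [b, a]"
      by (rule FF_append[OF ne _ l]) simp
    have e2: "FF X \<theta> z [b, a] = stp X \<theta> z b a" by simp
    have e3: "FF X \<theta> z (a # b # rest) = stp X \<theta> z a b + FF X \<theta> z (b # rest)" by simp
    have e4: "FF X \<theta> z (rev (a # b # rest)) = FF X \<theta> z (rev (b # rest) @ tl [b, a])" by (simp only: r)
    show ?thesis using e e2 e3 e4 ih(2) stp_swap[of X \<theta> z a b] by linarith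
  qed
  ultimately show ?case by blast
qed auto



lemma chain_list:
  fixes S :: "'a::order set"
  shows "finite S \<Longrightarrow> (\<forall>x\<in>S. \<forall>y\<in>S. x \<le> y \<or> y \<le> x) \<Longrightarrow> \<exists>l. sorted_wrt (<) l \<and> set l = S"
proof (induction S rule: remove_induct)
  case empty
  then show ?case by auto
next
  case infinite
  then show ?case by auto
next
  case (remove A)
  obtain m where m: "m \<in> A" "\<forall>b\<in>A. b \<le> m \<longrightarrow> m = b"
    using finite_has_minimal[OF remove(1) remove(2)] by blast
  have mle: "\<forall>y\<in>A. m \<le> y"
  proof
    fix y assume y: "y \<in> A"
    then have "y \<le> m \<or> m \<le> y" using remove.prems(2) m(1) by blast
    then show "m \<le> y" using m(2) y by auto
  qed
  obtain l where l: "sorted_wrt (<) l" "set l = A - {m}"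
    using remove.IH[OF m(1)] remove.prems(2) remove.hyps(1) by blast
  have "sorted_wrt (<) (m # l)" using l mle by (auto simp: order.strict_iff_order)
  moreover have "set (m # l) = A" using l m(1) by auto
  ultimately show ?case by blast
qed

lemma exists_max_chain:
  fixes X :: "'a::order set"
  assumes fin: "finite X" and ab: "a \<in> X" "b \<in> X" "a < b"
  shows "\<exists>D. max_chain X D \<and> a \<in> set D \<and> b \<in> set D"
proof -
  let ?A = "{C. is_chain_in X C \<and> {a, b} \<subseteq> C}"
  have finA: "finite ?A"
    by (rule finite_subset[of _ "Pow X"]) (auto simp: is_chain_in_def fin)
  have "{a, b} \<in> ?A" using ab by (auto simp: is_chain_in_def)
  then have neA: "?A \<noteq> {}" by blast
  obtain C where C: "C \<in> ?A" "\<forall>C'\<in>?A. C \<le> C' \<longrightarrow> C = C'"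
    using finite_has_maximal[OF finA neA] by blast
  have finC: "finite C" using C(1) fin by (auto simp: is_chain_in_def intro: finite_subset)
  obtain l where l: "sorted_wrt (<) l" "set l = C"
    using chain_list[OF finC] C(1) by (auto simp: is_chain_in_def)
  have "max_chain X l" unfolding max_chain_def
    using l C by auto
  then show ?thesis using l C(1) by auto
qed

lemma sorted_less_idx:
  fixes D :: "'a::order list"
  assumes "sorted_wrt (<) D" "i < length D" "j < length D" "D ! i < D ! j"
  shows "i < j"
proof (rule ccontr)
  assume "\<not> i < j"
  then have "j < i \<or> j = i" by auto
  then show False
  proof
    assume "j < i"
    then have "D ! j < D ! i" using sorted_wrt_nth_less[OF assms(1)] assms by blast
    then show False using assms(4) by (metis less_asym)
  next
    assume "j = i" then show False using assms(4) by auto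
  qed
qed

lemma max_chain_covers:
  assumes mc: "max_chain X D" and i: "Suc i < length D"
  shows "covers X (D ! i) (D ! Suc i)"
proof -
  have s: "sorted_wrt (<) D" and ch: "is_chain_in X (set D)"
    and mx: "\<forall>C. is_chain_in X C \<and> set D \<subseteq> C \<longrightarrow> C = set D"
    using mc by (auto simp: max_chain_def)
  have lt: "D ! i < D ! Suc i" using sorted_wrt_nth_less[OF s, of i "Suc i"] i by simp
  have inX: "D ! i \<in> X" "D ! Suc i \<in> X" using ch i by (auto simp: is_chain_in_def)
  have "\<not> (\<exists>w\<in>X. D ! i < w \<and> w < D ! Suc i)"
  proof
    assume "\<exists>w\<in>X. D ! i < w \<and> w < D ! Suc i"
    then obtain w where w: "w \<in> X" "D ! i < w" "w < D ! Suc i" by blast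
    have comp: "\<forall>y\<in>set D. w \<le> y \<or> y \<le> w"
    proof
      fix y assume "y \<in> set D"
      then obtain j where j: "j < length D" "y = D ! j" by (auto simp: in_set_conv_nth)
      show "w \<le> y \<or> y \<le> w"
      proof (cases "j \<le> i")
        case True
        then have "D ! j \<le> D ! i"
          using sorted_wrt_nth_less[OF s, of j i] i by (cases "j = i") auto
        then show ?thesis using j w by auto
      next
        case False
        then have "D ! Suc i \<le> D ! j"
          using sorted_wrt_nth_less[OF s, of "Suc i" j] j by (cases "j = Suc i") auto
        then show ?thesis using j w by auto
      qed
    qed
    have "is_chain_in X (insert w (set D))"
      using ch comp w(1) unfolding is_chain_in_def by auto
    then have "insert w (set D) = set D" using mx by blast
    then have "w \<in> set D" by blast
    then obtain j where j: "j < length D" "w = D ! j" by (auto simp: in_set_conv_nth)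
    have "i < j" using sorted_less_idx[OF s _ j(1)] w(2) j i by auto
    moreover have "j < Suc i" using sorted_less_idx[OF s j(1) i] w(3) j by auto
    ultimately show False by auto
  qed
  then show ?thesis using lt inX by (auto simp: covers_def)
qed

lemma sorted_unique:
  fixes xs :: "'a::order list"
  shows "sorted_wrt (<) xs \<Longrightarrow> sorted_wrt (<) ys \<Longrightarrow> set xs = set ys \<Longrightarrow> xs = ys"
proof (induction xs arbitrary: ys)
  case Nil
  then show ?case by auto
next
  case (Cons x xs)
  then obtain y ys' where ys: "ys = y # ys'" by (cases ys) auto
  have xy: "x = y"
  proof (rule ccontr)
    assume ne: "x \<noteq> y"
    have "x \<in> set ys'" using Cons.prems(3) ys ne by auto
    then have "y < x" using Cons.prems(2) ys by auto
    moreover have "y \<in> set xs" using Cons.prems(3) ys ne by auto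
    then have "x < y" using Cons.prems(1) by auto
    ultimately show False by auto
  qed
  have "x \<notin> set xs" using Cons.prems(1) by auto
  moreover have "y \<notin> set ys'" using Cons.prems(2) ys by auto
  ultimately have "set xs = set ys'" using Cons.prems(3) ys xy by auto
  then have "xs = ys'" using Cons.IH Cons.prems ys by auto
  then show ?case using ys xy by simp
qed

lemma fs_pre:
  assumes inj: "inj_on \<theta> (basisB X)" and xy: "(x, y) \<in> basisB X" and z: "z \<in> X"
    and th: "\<theta> (x, y) = (a, b)"
  shows "fs X \<theta> z a b = (if x = z then 1 else 0) - (if y = z then 1 else 0)"
proof -
  have xyX: "x \<in> X" "y \<in> X" "x < y" using xy by (auto simp: basisB_def)
  have 1: "(\<exists>w\<in>X. z < w \<and> \<theta> (z, w) = (a, b)) \<longleftrightarrow> x = z"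
  proof
    assume "\<exists>w\<in>X. z < w \<and> \<theta> (z, w) = (a, b)"
    then obtain w where w: "w \<in> X" "z < w" "\<theta> (z, w) = (a, b)" by blast
    have zw: "(z, w) \<in> basisB X" using w z by (auto simp: basisB_def)
    have "(z, w) = (x, y)" by (rule inj_onD[OF inj _ zw xy]) (simp add: w(3) th)
    then show "x = z" by simp
  next
    assume "x = z" then show "\<exists>w\<in>X. z < w \<and> \<theta> (z, w) = (a, b)" using xyX th by auto
  qed
  have 2: "(\<exists>w\<in>X. w < z \<and> \<theta> (w, z) = (a, b)) \<longleftrightarrow> y = z"
  proof
    assume "\<exists>w\<in>X. w < z \<and> \<theta> (w, z) = (a, b)"
    then obtain w where w: "w \<in> X" "w < z" "\<theta> (w, z) = (a, b)" by blast
    have zw: "(w, z) \<in> basisB X" using w z by (auto simp: basisB_def)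
    have "(w, z) = (x, y)" by (rule inj_onD[OF inj _ zw xy]) (simp add: w(3) th)
    then show "y = z" by simp
  next
    assume "y = z" then show "\<exists>w\<in>X. w < z \<and> \<theta> (w, z) = (a, b)" using xyX th by auto
  qed
  show ?thesis unfolding fs_def 1 2 by simp
qed

lemma segment:
  assumes s: "sorted_wrt (<) D" and DX: "set D \<subseteq> X"
    and cov: "\<forall>i. Suc i < length D \<longrightarrow> covers X (D ! i) (D ! Suc i)"
    and h: "\<forall>i j. i < j \<and> j < length D \<longrightarrow> fs X \<theta> z (D ! i) (D ! j) = h i - h j"
    and pq: "p \<le> q" "q < length D"
  shows "\<exists>r. wk X r \<and> hd r = D ! p \<and> last r = D ! q \<and> FF X \<theta> z r = h p - h q"
  using pq
proof (induction q)
  case 0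
  then have "p = 0" by simp
  then show ?case using DX 0 by (intro exI[of _ "[D ! p]"]) auto
next
  case (Suc q)
  show ?case
  proof (cases "p = Suc q")
    case True
    then show ?thesis using DX Suc.prems by (intro exI[of _ "[D ! p]"]) auto
  next
    case False
    then have pq': "p \<le> q" using Suc.prems by simp
    obtain r where r: "wk X r" "hd r = D ! p" "last r = D ! q" "FF X \<theta> z r = h p - h q"
      using Suc.IH[OF pq'] Suc.prems by auto
    have c: "covers X (D ! q) (D ! Suc q)" using cov Suc.prems by auto
    have w2: "wk X [D ! q, D ! Suc q]" using c by (auto simp: covers_def)
    have lt: "D ! q < D ! Suc q" using c by (auto simp: covers_def)
    have l: "last r = hd [D ! q, D ! Suc q]" using r by simp
    have ne: "r \<noteq> []" using wk_ne[OF r(1)] .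
    have e: "FF X \<theta> z (r @ tl [D ! q, D ! Suc q]) = FF X \<theta> z r + FF X \<theta> z [D ! q, D ! Suc q]"
      by (rule FF_append[OF ne _ l]) simp
    have e2: "FF X \<theta> z [D ! q, D ! Suc q] = h q - h (Suc q)"
      using lt h Suc.prems by (simp add: stp_def)
    show ?thesis
      apply (rule exI[of _ "r @ tl [D ! q, D ! Suc q]"])
      using wk_append[OF r(1) w2 l] e e2 r ne by auto
  qed
qed



definition increl :: "('a \<times> 'a \<Rightarrow> 'a \<times> 'a) \<Rightarrow> 'a list \<Rightarrow> 'a list \<Rightarrow> bool" where
  "increl \<theta> C D \<longleftrightarrow> (\<forall>i j. i < j \<and> j < length C \<longrightarrow> \<theta> (C ! i, C ! j) = (D ! i, D ! j))"

definition decrel :: "('a \<times> 'a \<Rightarrow> 'a \<times> 'a) \<Rightarrow> 'a list \<Rightarrow> 'a list \<Rightarrow> bool" where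
  "decrel \<theta> C D \<longleftrightarrow> (\<forall>i j. i < j \<and> j < length C \<longrightarrow>
     \<theta> (C ! i, C ! j) = (D ! (length C - 1 - j), D ! (length C - 1 - i)))"

definition pairs :: "'a list \<Rightarrow> ('a \<times> 'a) set" where
  "pairs L = {(L ! i, L ! j) | i j. i < j \<and> j < length L}"

lemma pairsI: "i < j \<Longrightarrow> j < length L \<Longrightarrow> (L ! i, L ! j) \<in> pairs L"
  unfolding pairs_def by blast

lemma pairs_image:
  assumes len: "length D = length C" and r: "increl \<theta> C D \<or> decrel \<theta> C D"
  shows "\<theta> ` pairs C = pairs D"
  using r
proof
  assume inc: "increl \<theta> C D"
  show ?thesis
  proof
    show "\<theta> ` pairs C \<subseteq> pairs D"
    proof
      fix p assume "p \<in> \<theta> ` pairs C"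
      then obtain i j where ij: "i < j" "j < length C" "p = \<theta> (C ! i, C ! j)" by (auto simp: pairs_def)
      then have "p = (D ! i, D ! j)" using inc by (auto simp: increl_def)
      then show "p \<in> pairs D" using ij len pairsI[of i j D] by simp
    qed
    show "pairs D \<subseteq> \<theta> ` pairs C"
    proof
      fix p assume "p \<in> pairs D"
      then obtain i j where ij: "i < j" "j < length D" "p = (D ! i, D ! j)" by (auto simp: pairs_def)
      then have "p = \<theta> (C ! i, C ! j)" using inc len by (auto simp: increl_def)
      moreover have "(C ! i, C ! j) \<in> pairs C" using ij len by (auto intro: pairsI)
      ultimately show "p \<in> \<theta> ` pairs C" by blast
    qed
  qed
next
  assume dec: "decrel \<theta> C D"
  let ?k = "length C"
  show ?thesis
  proof
    show "\<theta> ` pairs C \<subseteq> pairs D"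
    proof
      fix p assume "p \<in> \<theta> ` pairs C"
      then obtain i j where ij: "i < j" "j < ?k" "p = \<theta> (C ! i, C ! j)" by (auto simp: pairs_def)
      then have "p = (D ! (?k - 1 - j), D ! (?k - 1 - i))" using dec by (auto simp: decrel_def)
      moreover have "?k - 1 - j < ?k - 1 - i" "?k - 1 - i < length D" using ij len by auto
      ultimately show "p \<in> pairs D" using pairsI[of "?k - 1 - j" "?k - 1 - i" D] by simp
    qed
    show "pairs D \<subseteq> \<theta> ` pairs C"
    proof
      fix p assume "p \<in> pairs D"
      then obtain i j where ij: "i < j" "j < length D" "p = (D ! i, D ! j)" by (auto simp: pairs_def)
      have lt: "?k - 1 - j < ?k - 1 - i" "?k - 1 - i < ?k" using ij len by auto
      have "\<theta> (C ! (?k - 1 - j), C ! (?k - 1 - i)) = (D ! (?k - 1 - (?k - 1 - i)), D ! (?k - 1 - (?k - 1 - j)))"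
        using dec lt unfolding decrel_def by blast
      moreover have "?k - 1 - (?k - 1 - i) = i" "?k - 1 - (?k - 1 - j) = j" using ij len by auto
      ultimately have "p = \<theta> (C ! (?k - 1 - j), C ! (?k - 1 - i))" using ij by simp
      moreover have "(C ! (?k - 1 - j), C ! (?k - 1 - i)) \<in> pairs C" using lt by (auto intro: pairsI)
      ultimately show "p \<in> \<theta> ` pairs C" by blast
    qed
  qed
qed

lemma pairs_sub: "max_chain X C \<Longrightarrow> pairs C \<subseteq> basisB X"
  unfolding pairs_def basisB_def max_chain_def is_chain_in_def
  by (auto dest: sorted_wrt_nth_less)

lemma pairs_cover:
  assumes "2 \<le> length C" "x \<in> set C"
  shows "\<exists>p\<in>pairs C. fst p = x \<or> snd p = x"
proof -
  obtain i where i: "i < length C" "x = C ! i" using assms(2) by (auto simp: in_set_conv_nth)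
  show ?thesis
  proof (cases "i = 0")
    case True
    have "(C ! 0, C ! 1) \<in> pairs C" using assms(1) by (auto intro: pairsI)
    then show ?thesis using True i by force
  next
    case False
    then have "(C ! 0, C ! i) \<in> pairs C" using i by (auto intro: pairsI)
    then show ?thesis using i by force
  qed
qed

lemma pairs_in: "p \<in> pairs C \<Longrightarrow> fst p \<in> set C \<and> snd p \<in> set C"
  by (auto simp: pairs_def)

lemma pairs_set_eq:
  assumes "2 \<le> length C1" "2 \<le> length C2" "pairs C1 = pairs C2"
  shows "set C1 = set C2"
proof -
  have "set C1 \<subseteq> set C2" if l2: "2 \<le> length C1" and peq: "pairs C1 = pairs C2" for C1 C2 :: "'b list"
  proof
    fix x assume x: "x \<in> set C1"
    obtain p where "p \<in> pairs C1" "fst p = x \<or> snd p = x" using pairs_cover[OF l2 x] by blast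
    then show "x \<in> set C2" using pairs_in[of p C2] peq by auto
  qed
  then show ?thesis using assms by (metis subset_antisym)
qed

lemma strict_distinct: "sorted_wrt (<) (xs :: 'a::order list) \<Longrightarrow> distinct xs"
  by (induction xs) auto

lemma preimage_chain:
  fixes X :: "'a::order set"
  assumes th: "\<theta> \<in> M_set X" and fin: "finite X" and mD: "max_chain X D" and lD: "2 \<le> length D"
  shows "\<exists>C. max_chain X C \<and> length C = length D \<and> (increl \<theta> C D \<or> decrel \<theta> C D)"
proof -
  let ?MC = "{us. max_chain X us \<and> 2 \<le> length us}"
  have bij: "bij_betw \<theta> (basisB X) (basisB X)"
    and Mp: "\<forall>us. max_chain X us \<longrightarrow> increasing_on X \<theta> us \<or> decreasing_on X \<theta> us"
    using th by (auto simp: M_set_def)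
  have inj: "inj_on \<theta> (basisB X)" using bij by (auto simp: bij_betw_def)
  have finMC: "finite ?MC"
  proof (rule finite_subset[OF _ finite_lists_length_le[OF fin, of "card X"]])
    show "?MC \<subseteq> {xs. set xs \<subseteq> X \<and> length xs \<le> card X}"
    proof
      fix us assume "us \<in> ?MC"
      then have m: "max_chain X us" by simp
      then have s: "set us \<subseteq> X" "distinct us"
        by (auto simp: max_chain_def is_chain_in_def strict_distinct)
      have "length us = card (set us)" using distinct_card[OF s(2)] by simp
      also have "\<dots> \<le> card X" using card_mono[OF fin s(1)] .
      finally show "us \<in> {xs. set xs \<subseteq> X \<and> length xs \<le> card X}" using s by simp
    qed
  qed
  define good where "good C D' \<longleftrightarrow> max_chain X D' \<and> length D' = length C \<and> (increl \<theta> C D' \<or> decrel \<theta> C D')" for C D'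
  define \<phi> where "\<phi> C = (SOME D'. good C D')" for C
  have ex: "\<exists>D'. good C D'" if "max_chain X C" for C
  proof -
    have "increasing_on X \<theta> C \<or> decreasing_on X \<theta> C" using Mp that by blast
    then show ?thesis unfolding good_def increasing_on_def decreasing_on_def increl_def decrel_def by blast
  qed
  have gphi: "good C (\<phi> C)" if "max_chain X C" for C
    unfolding \<phi>_def using someI_ex[OF ex[OF that]] .
  have sub: "\<phi> ` ?MC \<subseteq> ?MC" using gphi unfolding good_def by auto
  have injphi: "inj_on \<phi> ?MC"
  proof
    fix C1 C2 assume C1: "C1 \<in> ?MC" and C2: "C2 \<in> ?MC" and eq: "\<phi> C1 = \<phi> C2"
    have g1: "good C1 (\<phi> C1)" and g2: "good C2 (\<phi> C2)" using gphi C1 C2 by auto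
    have "\<theta> ` pairs C1 = pairs (\<phi> C1)" using g1 pairs_image unfolding good_def by blast
    moreover have "\<theta> ` pairs C2 = pairs (\<phi> C2)" using g2 pairs_image unfolding good_def by blast
    ultimately have "\<theta> ` pairs C1 = \<theta> ` pairs C2" using eq by simp
    then have "pairs C1 = pairs C2"
      using inj_on_image_eq_iff[OF inj pairs_sub pairs_sub] C1 C2 by blast
    then have "set C1 = set C2" using pairs_set_eq C1 C2 by blast
    then show "C1 = C2" using sorted_unique C1 C2 by (auto simp: max_chain_def)
  qed
  have "\<phi> ` ?MC = ?MC" using endo_inj_surj[OF finMC sub injphi] .
  moreover have "D \<in> ?MC" using mD lD by simp
  ultimately obtain C where C: "C \<in> ?MC" "\<phi> C = D" by (metis (no_types, lifting) imageE)
  then have "good C D" using gphi by auto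
  then show ?thesis using C unfolding good_def by auto
qed



lemma refine:
  fixes X :: "'a::order set"
  assumes th: "\<theta> \<in> M_set X" and fin: "finite X" and ab: "a \<in> X" "b \<in> X" "a < b" and z: "z \<in> X"
  shows "\<exists>r. wk X r \<and> hd r = a \<and> last r = b \<and> FF X \<theta> z r = fs X \<theta> z a b"
proof -
  obtain D where D: "max_chain X D" "a \<in> set D" "b \<in> set D" using exists_max_chain[OF fin ab] by blast
  have s: "sorted_wrt (<) D" and DX: "set D \<subseteq> X" using D(1) by (auto simp: max_chain_def is_chain_in_def)
  obtain p where p: "p < length D" "D ! p = a" using D(2) by (auto simp: in_set_conv_nth)
  obtain q where q: "q < length D" "D ! q = b" using D(3) by (auto simp: in_set_conv_nth)
  have pq: "p < q" using sorted_less_idx[OF s p(1) q(1)] p q ab by simp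
  have l2: "2 \<le> length D" using pq q by simp
  obtain C where C: "max_chain X C" "length C = length D" "increl \<theta> C D \<or> decrel \<theta> C D"
    using preimage_chain[OF th fin D(1) l2] by blast
  have inj: "inj_on \<theta> (basisB X)" using th by (auto simp: M_set_def bij_betw_def)
  have inB: "(C ! i, C ! j) \<in> basisB X" if "i < j" "j < length C" for i j
    using pairs_sub[OF C(1)] pairsI[OF that] by blast
  define k where "k = length D"
  have "\<exists>h. \<forall>i j. i < j \<and> j < length D \<longrightarrow> fs X \<theta> z (D ! i) (D ! j) = h i - h j"
    using C(3)
  proof
    assume inc: "increl \<theta> C D"
    show ?thesis
    proof (intro exI allI impI)
      fix i j assume ij: "i < j \<and> j < length D"
      have "\<theta> (C ! i, C ! j) = (D ! i, D ! j)" using inc ij C(2) by (auto simp: increl_def)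
      moreover have bB: "(C ! i, C ! j) \<in> basisB X" using inB ij C(2) by auto
      ultimately have "fs X \<theta> z (D ! i) (D ! j) = (if C ! i = z then 1 else 0) - (if C ! j = z then 1 else 0)"
        using fs_pre[OF inj bB z] by blast
      then
      show "fs X \<theta> z (D ! i) (D ! j) = (\<lambda>i. if C ! i = z then 1 else 0) i - (\<lambda>i. if C ! i = z then 1 else 0) j"
        by simp
    qed
  next
    assume dec: "decrel \<theta> C D"
    show ?thesis
    proof (intro exI allI impI)
      fix i j assume ij: "i < j \<and> j < length D"
      have lt: "k - 1 - j < k - 1 - i" "k - 1 - i < length C" using ij C(2) k_def by auto
      have "\<theta> (C ! (k - 1 - j), C ! (k - 1 - i)) = (D ! (length C - 1 - (k - 1 - i)), D ! (length C - 1 - (k - 1 - j)))"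
        using dec lt unfolding decrel_def by blast
      then have "\<theta> (C ! (k - 1 - j), C ! (k - 1 - i)) = (D ! (k - 1 - (k - 1 - i)), D ! (k - 1 - (k - 1 - j)))"
        using C(2) k_def by simp
      moreover have "k - 1 - (k - 1 - i) = i" "k - 1 - (k - 1 - j) = j" using ij k_def by auto
      ultimately have e: "\<theta> (C ! (k - 1 - j), C ! (k - 1 - i)) = (D ! i, D ! j)" by simp
      from fs_pre[OF inj inB[OF lt] z e]
      show "fs X \<theta> z (D ! i) (D ! j) = (\<lambda>i. - (if C ! (k - 1 - i) = z then 1 else 0)) i - (\<lambda>i. - (if C ! (k - 1 - i) = z then 1 else 0)) j"
        by simp
    qed
  qed
  then obtain h where h: "\<forall>i j. i < j \<and> j < length D \<longrightarrow> fs X \<theta> z (D ! i) (D ! j) = h i - h j" by blast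
  have cov: "\<forall>i. Suc i < length D \<longrightarrow> covers X (D ! i) (D ! Suc i)" using max_chain_covers[OF D(1)] by blast
  obtain r where r: "wk X r" "hd r = D ! p" "last r = D ! q" "FF X \<theta> z r = h p - h q"
    using segment[OF s DX cov h, of p q] pq q by auto
  have "fs X \<theta> z a b = h p - h q" using h pq q p(2) q(2) by auto
  then show ?thesis using r p q by auto
qed

lemma last_app_tl: "xs \<noteq> [] \<Longrightarrow> ys \<noteq> [] \<Longrightarrow> last xs = hd ys \<Longrightarrow> last (xs @ tl ys) = last ys"
  by (cases ys; cases "tl ys") auto

lemma sw_to_wk:
  fixes X :: "'a::order set"
  assumes th: "\<theta> \<in> M_set X" and fin: "finite X" and z: "z \<in> X"
  shows "sw X us \<Longrightarrow> \<exists>ws. wk X ws \<and> hd ws = hd us \<and> last ws = last us \<and> FF X \<theta> z ws = FF X \<theta> z us"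
proof (induction us rule: induct_list012)
  case 1
  then show ?case by simp
next
  case (2 a)
  then show ?case by (intro exI[of _ "[a]"]) simp
next
  case (3 a b rest)
  have aX0: "a \<in> X" "a < b \<or> b < a" "sw X (b # rest)" using 3(3) by simp_all
  have "b \<in> X" using aX0(3) by (cases rest) simp_all
  note aX = aX0(1) this aX0(2) aX0(3)
  obtain ws' where ws': "wk X ws'" "hd ws' = b" "last ws' = last (b # rest)" "FF X \<theta> z ws' = FF X \<theta> z (b # rest)"
    using 3(2) aX(4) by auto
  have "\<exists>r. wk X r \<and> hd r = a \<and> last r = b \<and> FF X \<theta> z r = stp X \<theta> z a b"
  proof (cases "a < b")
    case True
    then show ?thesis using refine[OF th fin aX(1) aX(2) True z] by (auto simp: stp_def)
  next
    case False
    then have ba: "b < a" using aX(3) by simp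
    obtain r' where r': "wk X r'" "hd r' = b" "last r' = a" "FF X \<theta> z r' = fs X \<theta> z b a"
      using refine[OF th fin aX(2) aX(1) ba z] by blast
    have ne: "r' \<noteq> []" using wk_ne[OF r'(1)] .
    have "wk X (rev r')" "FF X \<theta> z (rev r') = - FF X \<theta> z r'" using rev_props[OF r'(1)] by auto
    moreover have "hd (rev r') = a" "last (rev r') = b" using r' ne by (auto simp: hd_rev last_rev)
    ultimately show ?thesis using r'(4) False ba by (intro exI[of _ "rev r'"]) (auto simp: stp_def)
  qed
  then obtain r where r: "wk X r" "hd r = a" "last r = b" "FF X \<theta> z r = stp X \<theta> z a b" by blast
  have ne: "r \<noteq> []" "ws' \<noteq> []" using wk_ne r(1) ws'(1) by auto
  have l: "last r = hd ws'" using r ws' by simp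
  have "wk X (r @ tl ws')" using wk_append[OF r(1) ws'(1) l] .
  moreover have "hd (r @ tl ws') = a" using ne r by simp
  moreover have "last (r @ tl ws') = last (a # b # rest)" using last_app_tl[OF ne l] ws'(3) by simp
  moreover have "FF X \<theta> z (r @ tl ws') = FF X \<theta> z (a # b # rest)"
    using FF_append[OF ne l] r(4) ws'(4) by simp
  ultimately show ?case by (intro exI[of _ "r @ tl ws'"]) simp
qed


theorem corollary3p2:
  fixes X :: "'a::order set" and \<theta> :: "'a \<times> 'a \<Rightarrow> 'a \<times> 'a"
  assumes "finite X" and "connected_poset X" and "\<theta> \<in> M_set X"
  shows "\<theta> \<in> AM_set X \<longleftrightarrow>
    (\<forall>us. semiwalk X us \<and> closed_sw us \<and> length us \<ge> 3 \<longrightarrow>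
       (\<forall>z\<in>X. balanced_at X \<theta> us z))"
proof
  assume "\<theta> \<in> AM_set X"
  then have adm: "admissible X \<theta>" by (simp add: AM_set_def)
  show "\<forall>us. semiwalk X us \<and> closed_sw us \<and> length us \<ge> 3 \<longrightarrow> (\<forall>z\<in>X. balanced_at X \<theta> us z)"
  proof (intro allI impI ballI)
    fix us z assume us: "semiwalk X us \<and> closed_sw us \<and> length us \<ge> 3" and z: "z \<in> X"
    have "sw X us" using us semiwalk_sw by blast
    then obtain ws where ws: "wk X ws" "hd ws = hd us" "last ws = last us" "FF X \<theta> z ws = FF X \<theta> z us"
      using sw_to_wk[OF assms(3) assms(1) z] by blast
    have "walk X ws" using ws(1) walk_wk by blast
    moreover have "closed_sw ws" using ws(2,3) us by (simp add: closed_sw_def)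
    ultimately have "balanced_at X \<theta> ws z" using adm z by (auto simp: admissible_def)
    then have "FF X \<theta> z ws = 0" using balanced_FF by blast
    then show "balanced_at X \<theta> us z" using ws(4) balanced_FF by metis
  qed
next
  assume H: "\<forall>us. semiwalk X us \<and> closed_sw us \<and> length us \<ge> 3 \<longrightarrow> (\<forall>z\<in>X. balanced_at X \<theta> us z)"
  have "admissible X \<theta>"
    unfolding admissible_def
  proof (intro allI impI ballI)
    fix us z assume us: "walk X us \<and> closed_sw us" and z: "z \<in> X"
    have sw: "semiwalk X us" using us by (simp add: walk_def)
    then have ne: "us \<noteq> []" by (simp add: semiwalk_def)
    show "balanced_at X \<theta> us z"
    proof (cases "length us \<ge> 3")
      case True
      then show ?thesis using H sw us z by blast
    next
      case False
      moreover have "0 < length us" using ne by simp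
      ultimately have "length us = 1 \<or> length us = 2" by linarith
      then show ?thesis
      proof
        assume "length us = 1"
        then obtain a where "us = [a]" by (cases us) auto
        then show ?thesis by (simp add: balanced_FF)
      next
        assume "length us = 2"
        then obtain a b where ab: "us = [a, b]" by (cases us; cases "tl us") auto
        then have "a = b" using us by (simp add: closed_sw_def)
        moreover have "a < b \<or> b < a" using sw ab by (auto simp: semiwalk_def)
        ultimately show ?thesis by auto
      qed
    qed
  qed
  then show "\<theta> \<in> AM_set X" using assms(3) by (simp add: AM_set_def)
qed

end
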